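(* In $FVB_3$, the elements $$h_0=\big[t_{1,2},[t_{2,3},t_{1,3}]\big],\qquad h_1=\big[t_{1,2},[d_{1,2,3},t_{1,3}]\big]$$ generate a subgroup isomorphic to the free group of rank $2$.
   Context: $FVB_3$ is the group with generators $\sigma_1,\sigma_2,\rho_1,\rho_2$ and defining relations $\sigma_i^2=\rho_i^2=1$ ($i=1,2$), $\sigma_1\sigma_2\sigma_1=\sigma_2\sigma_1\sigma_2$, $\rho_1\rho_2\rho_1=\rho_2\rho_1\rho_2$, $\rho_1\rho_2\sigma_1=\sigma_2\rho_1\rho_2$. Define $\lambda_{1,2}=\rho_1\sigma_1$, $\lambda_{2,3}=\rho_2\sigma_2$, $\lambda_{1,3}=\rho_2\lambda_{1,2}\rho_2$; $t_{i,j}=\lambda_{i,j}^2$ and $d_{1,2,3}=\lambda_{2,3}^{-1}\lambda_{1,2}^{-1}\lambda_{2,3}\lambda_{1,3}$. Commutators are $[g,h]=ghg^{-1}h^{-1}$. *)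

theory Defs
  imports "HOL-Algebra.Algebra"
begin

text \<open>A word over generators of type 'g: a list of letters (g, True) = g, (g, False) = g^-1.\<close>
type_synonym 'g word = "('g \<times> bool) list"

definition word_inv :: "'g word \<Rightarrow> 'g word" where
  "word_inv w = rev (map (\<lambda>(g, b). (g, \<not> b)) w)"

definition words_over :: "'g set \<Rightarrow> 'g word set" where
  "words_over S = {w. fst ` set w \<subseteq> S}"

inductive_set pres_rel :: "'g set \<Rightarrow> 'g word set \<Rightarrow> ('g word \<times> 'g word) set"
  for S :: "'g set" and R :: "'g word set" where
  refl: "w \<in> words_over S \<Longrightarrow> (w, w) \<in> pres_rel S R"
| sym: "(u, v) \<in> pres_rel S R \<Longrightarrow> (v, u) \<in> pres_rel S R"
| trans: "(u, v) \<in> pres_rel S R \<Longrightarrow> (v, w) \<in> pres_rel S R \<Longrightarrow> (u, w) \<in> pres_rel S R"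
| cancel: "u \<in> words_over S \<Longrightarrow> v \<in> words_over S \<Longrightarrow> a \<in> S \<Longrightarrow>
           (u @ [(a, b), (a, \<not> b)] @ v, u @ v) \<in> pres_rel S R"
| relator: "r \<in> R \<Longrightarrow> r \<in> words_over S \<Longrightarrow> u \<in> words_over S \<Longrightarrow> v \<in> words_over S \<Longrightarrow>
           (u @ r @ v, u @ v) \<in> pres_rel S R"

definition pres_mult :: "'g set \<Rightarrow> 'g word set \<Rightarrow> 'g word set \<Rightarrow> 'g word set \<Rightarrow> 'g word set" where
  "pres_mult gs rs A B = pres_rel gs rs `` {w. \<exists>x\<in>A. \<exists>y\<in>B. w = x @ y}"

definition presented_group :: "'g set \<Rightarrow> 'g word set \<Rightarrow> ('g word set) monoid" where
  "presented_group S R =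
     \<lparr> carrier = (\<lambda>w. pres_rel S R `` {w}) ` words_over S,
       monoid.mult = pres_mult S R,
       monoid.one = pres_rel S R `` {[]} \<rparr>"

definition pres_gen :: "'g set \<Rightarrow> 'g word set \<Rightarrow> 'g \<Rightarrow> 'g word set" where
  "pres_gen S R a = pres_rel S R `` {[(a, True)]}"

definition free_group2 :: "(nat word set) monoid" where
  "free_group2 = presented_group {0, 1} {}"

text \<open>Generators: 0 = sigma_1, 1 = sigma_2, 2 = rho_1, 3 = rho_2.
  A relation a = b is encoded by the relator a b^-1.\<close>
definition FVB3_gens :: "nat set" where "FVB3_gens = {0, 1, 2, 3}"

definition FVB3_rels :: "nat word set" where
  "FVB3_rels =
    { [(0, True), (0, True)],
      [(1, True), (1, True)],
      [(2, True), (2, True)],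
      [(3, True), (3, True)],
      [(0, True), (1, True), (0, True)] @ word_inv [(1, True), (0, True), (1, True)],
      [(2, True), (3, True), (2, True)] @ word_inv [(3, True), (2, True), (3, True)],
      [(2, True), (3, True), (0, True)] @ word_inv [(1, True), (2, True), (3, True)] }"

definition FVB3 :: "(nat word set) monoid" where
  "FVB3 = presented_group FVB3_gens FVB3_rels"

definition sigma1 where "sigma1 = pres_gen FVB3_gens FVB3_rels 0"
definition sigma2 where "sigma2 = pres_gen FVB3_gens FVB3_rels 1"
definition rho1 where "rho1 = pres_gen FVB3_gens FVB3_rels 2"
definition rho2 where "rho2 = pres_gen FVB3_gens FVB3_rels 3"

definition lambda12 where "lambda12 = rho1 \<otimes>\<^bsub>FVB3\<^esub> sigma1"
definition lambda23 where "lambda23 = rho2 \<otimes>\<^bsub>FVB3\<^esub> sigma2"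
definition lambda13 where "lambda13 = rho2 \<otimes>\<^bsub>FVB3\<^esub> lambda12 \<otimes>\<^bsub>FVB3\<^esub> rho2"

definition t12 where "t12 = lambda12 \<otimes>\<^bsub>FVB3\<^esub> lambda12"
definition t23 where "t23 = lambda23 \<otimes>\<^bsub>FVB3\<^esub> lambda23"
definition t13 where "t13 = lambda13 \<otimes>\<^bsub>FVB3\<^esub> lambda13"

definition d123 where
  "d123 = inv\<^bsub>FVB3\<^esub> lambda23 \<otimes>\<^bsub>FVB3\<^esub> inv\<^bsub>FVB3\<^esub> lambda12
          \<otimes>\<^bsub>FVB3\<^esub> lambda23 \<otimes>\<^bsub>FVB3\<^esub> lambda13"

definition comm :: "('a, 'b) monoid_scheme \<Rightarrow> 'a \<Rightarrow> 'a \<Rightarrow> 'a" where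
  "comm G g h = g \<otimes>\<^bsub>G\<^esub> h \<otimes>\<^bsub>G\<^esub> inv\<^bsub>G\<^esub> g \<otimes>\<^bsub>G\<^esub> inv\<^bsub>G\<^esub> h"

definition h0 where "h0 = comm FVB3 t12 (comm FVB3 t23 t13)"
definition h1 where "h1 = comm FVB3 t12 (comm FVB3 d123 t13)"

end

theory Submission
  imports Defs
begin


lemma words_over_append[simp]:
  "u @ v \<in> words_over S \<longleftrightarrow> u \<in> words_over S \<and> v \<in> words_over S"
  by (auto simp: words_over_def)

lemma words_over_Cons[simp]:
  "x # v \<in> words_over S \<longleftrightarrow> fst x \<in> S \<and> v \<in> words_over S"
  by (auto simp: words_over_def)

lemma words_over_Nil[simp]: "[] \<in> words_over S"
  by (auto simp: words_over_def)

lemma word_inv_Nil[simp]: "word_inv [] = []"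
  by (simp add: word_inv_def)

lemma word_inv_Cons[simp]: "word_inv (x # w) = word_inv w @ [(fst x, \<not> snd x)]"
  by (cases x) (simp add: word_inv_def)

lemma word_inv_append[simp]: "word_inv (u @ v) = word_inv v @ word_inv u"
  by (simp add: word_inv_def)

lemma word_inv_inv[simp]: "word_inv (word_inv w) = w"
  by (induction w) auto

lemma word_inv_words[simp]: "word_inv w \<in> words_over S \<longleftrightarrow> w \<in> words_over S"
  by (induction w) auto

lemma pres_rel_words:
  assumes "(u, v) \<in> pres_rel S R"
  shows "u \<in> words_over S \<and> v \<in> words_over S"
  using assms by induction auto

lemma pres_rel_ctxt:
  assumes "(u, v) \<in> pres_rel S R" "p \<in> words_over S" "q \<in> words_over S"
  shows "(p @ u @ q, p @ v @ q) \<in> pres_rel S R"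
  using assms
proof (induction arbitrary: p q)
  case (refl w)
  then show ?case by (auto intro: pres_rel.refl)
next
  case (sym u v)
  then show ?case by (auto intro: pres_rel.sym)
next
  case (trans u v w)
  then show ?case by (blast intro: pres_rel.trans)
next
  case (cancel u v a b)
  have "((p @ u) @ [(a, b), (a, \<not> b)] @ (v @ q), (p @ u) @ (v @ q)) \<in> pres_rel S R"
    using cancel by (intro pres_rel.cancel) auto
  then show ?case by simp
next
  case (relator r u v)
  have "((p @ u) @ r @ (v @ q), (p @ u) @ (v @ q)) \<in> pres_rel S R"
    using relator by (intro pres_rel.relator) auto
  then show ?case by simp
qed

lemma pres_rel_app:
  assumes "(u, u') \<in> pres_rel S R" "(v, v') \<in> pres_rel S R"
  shows "(u @ v, u' @ v') \<in> pres_rel S R"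
proof -
  have w: "u' \<in> words_over S" "v \<in> words_over S"
    using assms pres_rel_words by blast+
  have "([] @ u @ v, [] @ u' @ v) \<in> pres_rel S R"
    using assms w by (intro pres_rel_ctxt) auto
  moreover have "(u' @ v @ [], u' @ v' @ []) \<in> pres_rel S R"
    using assms w by (intro pres_rel_ctxt) auto
  ultimately show ?thesis by (auto intro: pres_rel.trans)
qed

lemma pres_rel_inv_cancel:
  assumes "w \<in> words_over S"
  shows "(word_inv w @ w, []) \<in> pres_rel S R"
  using assms
proof (induction w)
  case Nil
  then show ?case by (auto intro: pres_rel.refl)
next
  case (Cons x w)
  obtain a b where x: "x = (a, b)" by (cases x)
  have "(word_inv w @ [(a, \<not> b), (a, \<not>\<not> b)] @ w, word_inv w @ w) \<in> pres_rel S R"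
    using Cons x by (intro pres_rel.cancel) auto
  then show ?case using Cons x by (auto intro: pres_rel.trans)
qed

lemma pres_rel_cancel_inv:
  assumes "w \<in> words_over S"
  shows "(w @ word_inv w, []) \<in> pres_rel S R"
  using pres_rel_inv_cancel[of "word_inv w" S R] assms by simp

abbreviation cls :: "'g set \<Rightarrow> 'g word set \<Rightarrow> 'g word \<Rightarrow> 'g word set" where
  "cls S R w \<equiv> pres_rel S R `` {w}"

lemma cls_eq_iff:
  assumes "u \<in> words_over S"
  shows "cls S R u = cls S R v \<longleftrightarrow> (u, v) \<in> pres_rel S R"
proof
  assume "cls S R u = cls S R v"
  moreover have "u \<in> cls S R u" using assms by (auto intro: pres_rel.refl)
  ultimately show "(u, v) \<in> pres_rel S R" by (auto intro: pres_rel.sym)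
next
  assume "(u, v) \<in> pres_rel S R"
  then show "cls S R u = cls S R v"
    by (auto intro: pres_rel.sym pres_rel.trans)
qed

lemma pres_mult_cls:
  assumes "u \<in> words_over S" "v \<in> words_over S"
  shows "pres_mult S R (cls S R u) (cls S R v) = cls S R (u @ v)"
proof
  show "pres_mult S R (cls S R u) (cls S R v) \<subseteq> cls S R (u @ v)"
  proof
    fix z assume "z \<in> pres_mult S R (cls S R u) (cls S R v)"
    then obtain x y where xy: "(u, x) \<in> pres_rel S R" "(v, y) \<in> pres_rel S R"
        "(x @ y, z) \<in> pres_rel S R"
      by (auto simp: pres_mult_def)
    then have "(u @ v, x @ y) \<in> pres_rel S R" using pres_rel_app by blast
    then show "z \<in> cls S R (u @ v)" using xy(3) by (auto intro: pres_rel.trans)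
  qed
next
  show "cls S R (u @ v) \<subseteq> pres_mult S R (cls S R u) (cls S R v)"
    using assms by (auto simp: pres_mult_def intro: pres_rel.refl)
qed

lemma presented_group_carrier:
  "carrier (presented_group S R) = cls S R ` words_over S"
  by (simp add: presented_group_def)

lemma presented_group_mult:
  assumes "u \<in> words_over S" "v \<in> words_over S"
  shows "cls S R u \<otimes>\<^bsub>presented_group S R\<^esub> cls S R v = cls S R (u @ v)"
  using assms by (simp add: presented_group_def pres_mult_cls)

lemma presented_group_one:
  "\<one>\<^bsub>presented_group S R\<^esub> = cls S R []"
  by (simp add: presented_group_def)

lemma presented_group_is_group: "group (presented_group S R)"
proof (rule groupI)
  fix x y assume "x \<in> carrier (presented_group S R)" "y \<in> carrier (presented_group S R)"
  then show "x \<otimes>\<^bsub>presented_group S R\<^esub> y \<in> carrier (presented_group S R)"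
    by (auto simp: presented_group_carrier presented_group_mult)
next
  show "\<one>\<^bsub>presented_group S R\<^esub> \<in> carrier (presented_group S R)"
    by (auto simp: presented_group_carrier presented_group_one)
next
  fix x y z assume "x \<in> carrier (presented_group S R)" "y \<in> carrier (presented_group S R)"
    "z \<in> carrier (presented_group S R)"
  then show "x \<otimes>\<^bsub>presented_group S R\<^esub> y \<otimes>\<^bsub>presented_group S R\<^esub> z =
     x \<otimes>\<^bsub>presented_group S R\<^esub> (y \<otimes>\<^bsub>presented_group S R\<^esub> z)"
    by (auto simp: presented_group_carrier presented_group_mult)
next
  fix x assume "x \<in> carrier (presented_group S R)"
  then show "\<one>\<^bsub>presented_group S R\<^esub> \<otimes>\<^bsub>presented_group S R\<^esub> x = x"
    by (auto simp: presented_group_carrier presented_group_mult presented_group_one)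
next
  fix x assume "x \<in> carrier (presented_group S R)"
  then obtain w where w: "w \<in> words_over S" "x = cls S R w"
    by (auto simp: presented_group_carrier)
  have "cls S R (word_inv w) \<otimes>\<^bsub>presented_group S R\<^esub> x = \<one>\<^bsub>presented_group S R\<^esub>"
    using w pres_rel_inv_cancel[OF w(1)]
    by (simp add: presented_group_mult presented_group_one cls_eq_iff)
  moreover have "cls S R (word_inv w) \<in> carrier (presented_group S R)"
    using w by (auto simp: presented_group_carrier)
  ultimately show "\<exists>y\<in>carrier (presented_group S R). y \<otimes>\<^bsub>presented_group S R\<^esub> x = \<one>\<^bsub>presented_group S R\<^esub>"
    by blast
qed

lemma presented_group_inv:
  assumes "w \<in> words_over S"
  shows "inv\<^bsub>presented_group S R\<^esub> cls S R w = cls S R (word_inv w)"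
proof (rule group.inv_equality[OF presented_group_is_group])
  show "cls S R (word_inv w) \<otimes>\<^bsub>presented_group S R\<^esub> cls S R w = \<one>\<^bsub>presented_group S R\<^esub>"
    using assms pres_rel_inv_cancel[OF assms]
    by (simp add: presented_group_mult presented_group_one cls_eq_iff)
qed (use assms in \<open>auto simp: presented_group_carrier\<close>)


section \<open>Free reduction via the van der Waerden action\<close>

definition lact :: "('a \<times> bool) \<Rightarrow> ('a \<times> bool) list \<Rightarrow> ('a \<times> bool) list" where
  "lact x r = (case r of [] \<Rightarrow> [x] | y # r' \<Rightarrow> if y = (fst x, \<not> snd x) then r' else x # r)"

definition aw :: "('a \<times> bool) list \<Rightarrow> ('a \<times> bool) list \<Rightarrow> ('a \<times> bool) list" where
  "aw w r = foldr lact w r"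

fun reduced :: "('a \<times> bool) list \<Rightarrow> bool" where
  "reduced [] = True"
| "reduced [x] = True"
| "reduced (x # y # r) = (y \<noteq> (fst x, \<not> snd x) \<and> reduced (y # r))"

lemma lact_Nil: "lact x [] = [x]" by (simp add: lact_def)
lemma lact_Cons: "lact x (y # r) = (if y = (fst x, \<not> snd x) then r else x # y # r)"
  by (simp add: lact_def)

lemma aw_Nil[simp]: "aw [] r = r" by (simp add: aw_def)
lemma aw_Cons[simp]: "aw (x # w) r = lact x (aw w r)" by (simp add: aw_def)
lemma aw_append: "aw (u @ v) r = aw u (aw v r)" by (simp add: aw_def)

lemma reduced_tl: "reduced (x # r) \<Longrightarrow> reduced r"
  by (cases r) auto

lemma reduced_lact: "reduced r \<Longrightarrow> reduced (lact x r)"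
  by (cases r) (auto simp: lact_def reduced_tl)

lemma lact_inv: "reduced r \<Longrightarrow> lact (fst x, \<not> snd x) (lact x r) = r"
proof (cases r)
  case Nil then show ?thesis by (auto simp: lact_def)
next
  case (Cons y r')
  assume red: "reduced r"
  show ?thesis
  proof (cases "y = (fst x, \<not> snd x)")
    case True
    then show ?thesis using Cons red
      by (cases r') (auto simp: lact_def prod_eq_iff)
  next
    case False
    then show ?thesis using Cons by (auto simp: lact_def)
  qed
qed

lemma reduced_aw: "reduced r \<Longrightarrow> reduced (aw w r)"
  by (induction w) (auto simp: reduced_lact)

lemma aw_lact: "reduced q \<Longrightarrow> reduced r \<Longrightarrow> aw (lact x q) r = lact x (aw q r)"
proof (cases q)
  case Nil then show ?thesis by (simp add: lact_def)
next
  case (Cons y q')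
  assume rq: "reduced q" and rr: "reduced r"
  show ?thesis
  proof (cases "y = (fst x, \<not> snd x)")
    case True
    have "lact x (aw q r) = lact x (lact (fst x, \<not> snd x) (aw q' r))"
      using Cons True by simp
    also have "\<dots> = aw q' r"
      using lact_inv[of "aw q' r" "(fst x, \<not> snd x)"] reduced_aw[OF rr] by simp
    finally show ?thesis using Cons True by (simp add: lact_def)
  next
    case False
    then show ?thesis using Cons by (simp add: lact_def)
  qed
qed

lemma aw_red: "reduced r \<Longrightarrow> aw w r = aw (aw w []) r"
proof (induction w)
  case Nil then show ?case by simp
next
  case (Cons x w)
  then show ?case using aw_lact[of "aw w []" r x] reduced_aw[of "[]" w] by simp
qed

lemma aw_triv: "aw w [] = [] \<Longrightarrow> reduced r \<Longrightarrow> aw w r = r"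
  using aw_red[of r w] by simp

lemma reduced_append_aw: "reduced (p @ r) \<Longrightarrow> aw p r = p @ r"
proof (induction p)
  case Nil then show ?case by simp
next
  case (Cons x p)
  have "reduced (p @ r)" using Cons.prems reduced_tl[of x "p @ r"] by simp
  then have "aw p r = p @ r" by (rule Cons.IH)
  then show ?case using Cons.prems
    by (cases "p @ r") (auto simp: lact_def)
qed

lemma reduced_last_tail:
  "reduced (p @ r) \<Longrightarrow> p \<noteq> [] \<Longrightarrow> reduced (last p # r)"
proof (induction p)
  case Nil then show ?case by simp
next
  case (Cons x p)
  then show ?case
    by (cases p) (auto dest: reduced_tl)
qed

lemma reduced_join:
  "reduced q \<Longrightarrow> q \<noteq> [] \<Longrightarrow> reduced (last q # r) \<Longrightarrow> reduced (q @ r)"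
proof (induction q rule: reduced.induct)
  case 1 then show ?case by simp
next
  case (2 x) then show ?case by simp
next
  case (3 x y q) then show ?case by simp
qed

lemma pong:
  assumes "pf' \<noteq> []" "reduced (pf' @ rest)"
    and "take (length pfx) (aw (Xw @ pf') []) = pfx"
    and "last (aw (Xw @ pf') []) = last pf'"
    and "aw (Xw @ pf') [] \<noteq> []"
  shows "\<exists>rest'. aw Xw (pf' @ rest) = pfx @ rest'"
proof -
  define Q where "Q = aw (Xw @ pf') []"
  have rr: "reduced rest" using assms(2)
    by (induction pf') (auto dest: reduced_tl)
  have "aw Xw (pf' @ rest) = aw Xw (aw pf' rest)"
    using reduced_append_aw[OF assms(2)] by simp
  also have "\<dots> = aw (Xw @ pf') rest" by (simp add: aw_append)
  also have "\<dots> = aw Q rest" using aw_red[OF rr] Q_def by metis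
  also have "\<dots> = Q @ rest"
  proof (rule reduced_append_aw, rule reduced_join)
    show "reduced Q" unfolding Q_def by (rule reduced_aw) simp
    show "Q \<noteq> []" using assms Q_def by simp
    show "reduced (last Q # rest)"
      using reduced_last_tail[OF assms(2) assms(1)] assms(4) Q_def by simp
  qed
  also have "\<dots> = pfx @ (drop (length pfx) Q @ rest)"
    using assms(3) Q_def by (metis append_assoc append_take_drop_id)
  finally show ?thesis by blast
qed

lemma set_aw: "set (aw w r) \<subseteq> set w \<union> set r"
proof (induction w)
  case Nil then show ?case by simp
next
  case (Cons x w)
  have "set (lact x q) \<subseteq> insert x (set q)" for q
    by (cases q) (auto simp: lact_def)
  then show ?case using Cons by fastforce
qed


section \<open>An action of FVB3 on reduced words times S3\<close>

definition ptab :: "nat list list" where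
  "ptab = [[2, 4, 0, 5, 1, 3], [1, 0, 3, 2, 5, 4], [2, 4, 0, 5, 1, 3], [1, 0, 3, 2, 5, 4]]"

definition wtab :: "nat word list list" where
  "wtab = [[[(0, True)], [(1, True)], [(0, False)], [(0, True)], [(1, False)], [(0, False)]],
           [[(0, True)], [(0, False)], [(1, True)], [(1, False)], [(0, True)], [(0, False)]],
           [[], [], [], [], [], []], [[], [], [], [], [], []]]"

definition Pg :: "nat \<Rightarrow> nat \<Rightarrow> nat" where "Pg a s = ptab ! a ! s"
definition Wg :: "nat \<Rightarrow> nat \<Rightarrow> nat word" where "Wg a s = wtab ! a ! s"

fun permX :: "nat word \<Rightarrow> nat \<Rightarrow> nat" where
  "permX [] s = s"
| "permX (x # w) s = Pg (fst x) (permX w s)"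

fun wordX :: "nat word \<Rightarrow> nat \<Rightarrow> nat word" where
  "wordX [] s = []"
| "wordX (x # w) s = Wg (fst x) (permX w s) @ wordX w s"

definition actX :: "nat word \<Rightarrow> nat word \<times> nat \<Rightarrow> nat word \<times> nat" where
  "actX w rs = (aw (wordX w (snd rs)) (fst rs), permX w (snd rs))"

lemma permX_append: "permX (u @ v) s = permX u (permX v s)"
  by (induction u) auto

lemma wordX_append: "wordX (u @ v) s = wordX u (permX v s) @ wordX v s"
  by (induction u) (auto simp: permX_append)

lemma actX_append: "actX (u @ v) rs = actX u (actX v rs)"
  by (simp add: actX_def wordX_append permX_append aw_append)

lemma six_cases: "(s::nat) < 6 \<Longrightarrow> s = 0 \<or> s = 1 \<or> s = 2 \<or> s = 3 \<or> s = 4 \<or> s = 5"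
  by auto

lemma gen_facts:
  assumes "a \<in> FVB3_gens" "s < 6"
  shows "Pg a s < 6 \<and> Pg a (Pg a s) = s \<and> aw (Wg a (Pg a s) @ Wg a s) [] = []"
proof -
  have "a = 0 \<or> a = 1 \<or> a = 2 \<or> a = 3" using assms by (auto simp: FVB3_gens_def)
  then show ?thesis using six_cases[OF assms(2)]
    by (auto simp: Pg_def Wg_def ptab_def wtab_def lact_def)
qed

lemma permX_lt: "w \<in> words_over FVB3_gens \<Longrightarrow> s < 6 \<Longrightarrow> permX w s < 6"
  by (induction w) (auto simp: gen_facts)

lemma rel_facts:
  assumes "r \<in> FVB3_rels" "s < 6"
  shows "permX r s = s \<and> aw (wordX r s) [] = []"
  using assms six_cases[OF assms(2)]
  by (auto simp: FVB3_rels_def word_inv_def Pg_def Wg_def ptab_def wtab_def lact_def)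

lemma actX_inv:
  assumes "(u, v) \<in> pres_rel FVB3_gens FVB3_rels"
  shows "reduced r \<Longrightarrow> s < 6 \<Longrightarrow> actX u (r, s) = actX v (r, s)"
  using assms
proof (induction arbitrary: r s)
  case (refl w) then show ?case by simp
next
  case (sym u v) then show ?case by simp
next
  case (trans u v w) then show ?case by simp
next
  case (cancel u v a b)
  obtain r' s' where rs': "actX v (r, s) = (r', s')" by fastforce
  have r': "reduced r'" "s' < 6"
    using rs' cancel reduced_aw[of r] permX_lt[of v s] by (auto simp: actX_def)
  have g: "Pg a s' < 6 \<and> Pg a (Pg a s') = s' \<and> aw (Wg a (Pg a s') @ Wg a s') [] = []"
    using gen_facts[OF cancel(3) r'(2)] .
  have "actX [(a, b), (a, \<not> b)] (r', s') = (r', s')"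
    using g aw_triv[OF _ r'(1)] by (simp add: actX_def)
  moreover have "actX (u @ [(a, b), (a, \<not> b)] @ v) (r, s) =
      actX u (actX [(a, b), (a, \<not> b)] (actX v (r, s)))"
    by (simp only: actX_append)
  ultimately show ?case using rs' by (simp add: actX_append)
next
  case (relator rr u v)
  obtain r' s' where rs': "actX v (r, s) = (r', s')" by fastforce
  have r': "reduced r'" "s' < 6"
    using rs' relator reduced_aw[of r] permX_lt[of v s] by (auto simp: actX_def)
  have "actX rr (r', s') = (r', s')"
    using rel_facts[OF relator(1) r'(2)] aw_triv[OF _ r'(1)] by (simp add: actX_def)
  moreover have "actX (u @ rr @ v) (r, s) = actX u (actX rr (actX v (r, s)))"
    by (simp only: actX_append)
  ultimately show ?case using rs' by (simp add: actX_append)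
qed


abbreviation clF :: "nat word \<Rightarrow> nat word set" where
  "clF w \<equiv> cls FVB3_gens FVB3_rels w"

lemma FVB3_mult:
  "u \<in> words_over FVB3_gens \<Longrightarrow> v \<in> words_over FVB3_gens \<Longrightarrow>
   clF u \<otimes>\<^bsub>FVB3\<^esub> clF v = clF (u @ v)"
  by (simp add: FVB3_def presented_group_mult)

lemma FVB3_inv:
  "u \<in> words_over FVB3_gens \<Longrightarrow> inv\<^bsub>FVB3\<^esub> clF u = clF (word_inv u)"
  by (simp add: FVB3_def presented_group_inv)

definition "l12w = [(2::nat, True), (0, True)]"
definition "l23w = [(3::nat, True), (1, True)]"
definition "l13w = [(3::nat, True)] @ l12w @ [(3, True)]"
definition "commw g h = g @ h @ word_inv g @ word_inv h"
definition "d123w = word_inv l23w @ word_inv l12w @ l23w @ l13w"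
definition "h0w = commw (l12w @ l12w) (commw (l23w @ l23w) (l13w @ l13w))"
definition "h1w = commw (l12w @ l12w) (commw d123w (l13w @ l13w))"

lemma gens_simps: "0 \<in> FVB3_gens" "Suc 0 \<in> FVB3_gens" "1 \<in> FVB3_gens" "2 \<in> FVB3_gens" "3 \<in> FVB3_gens"
  by (auto simp: FVB3_gens_def)

lemma h0_eq: "h0 = clF h0w"
  by (simp add: h0_def h0w_def comm_def commw_def t12_def t23_def t13_def lambda12_def
      lambda23_def lambda13_def l12w_def l23w_def l13w_def sigma1_def sigma2_def rho1_def
      rho2_def pres_gen_def FVB3_mult FVB3_inv gens_simps)

lemma h1_eq: "h1 = clF h1w"
  by (simp add: h1_def h1w_def comm_def commw_def t12_def t23_def t13_def lambda12_def
      lambda23_def lambda13_def l12w_def l23w_def l13w_def sigma1_def sigma2_def rho1_def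
      rho2_def pres_gen_def FVB3_mult FVB3_inv gens_simps d123_def d123w_def)

lemma h0w_words: "h0w \<in> words_over FVB3_gens"
  by (simp add: h0w_def commw_def l12w_def l23w_def l13w_def gens_simps)

lemma h1w_words: "h1w \<in> words_over FVB3_gens"
  by (simp add: h1w_def commw_def l12w_def l23w_def l13w_def d123w_def gens_simps)


section \<open>Ping-pong\<close>

definition Wfv :: "nat \<times> bool \<Rightarrow> nat word" where
  "Wfv x = (let h = (if fst x = 0 then h0w else h1w) in if snd x then h else word_inv h)"

definition sub :: "nat word \<Rightarrow> nat word" where
  "sub w = concat (map Wfv w)"

definition pf :: "nat \<times> bool \<Rightarrow> nat word" where
  "pf x = (if fst x = 0 then (if snd x then [(0, True), (0, True), (0, True), (0, True)]
                               else [(0, True), (0, True), (1, True), (1, True)])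
           else (if snd x then [(0, True), (1, True), (1, True)] else [(0, False)]))"

definition Wd :: "nat \<times> bool \<Rightarrow> nat word" where
  "Wd x = (if fst x = 0 then (if snd x then
   [(0, True), (0, True), (0, True), (0, True), (1, True), (1, True), (0, False), (0, False), (1, False), (1, False), (0, False), (0, False), (1, True), (1, True), (0, True), (0, True), (1, False), (1, False), (0, False), (0, False)]
   else
   [(0, True), (0, True), (1, True), (1, True), (0, False), (0, False), (1, False), (1, False), (0, True), (0, True), (1, True), (1, True), (0, True), (0, True), (1, False), (1, False), (0, False), (0, False), (0, False), (0, False)])
   else (if snd x then
   [(0, True), (1, True), (1, True), (0, True), (1, False), (1, False), (0, False), (0, False), (1, True), (1, True), (0, False), (1, False), (1, False), (0, True)]
   else
   [(0, False), (1, True), (1, True), (0, True), (1, False), (1, False), (0, True), (0, True), (1, True), (1, True), (0, False), (1, False), (1, False), (0, False)]))"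

lemma letter_cases: "fst (x::nat \<times> bool) \<in> {0, 1} \<Longrightarrow>
  x = (0, True) \<or> x = (0, False) \<or> x = (1, True) \<or> x = (1, False)"
  by (cases x) auto

lemma Wfv_h0: "permX h0w 0 = 0 \<and> aw (wordX h0w 0) [] = Wd (0, True)"
  by (simp add: h0w_def commw_def l12w_def l23w_def l13w_def Wd_def Pg_def Wg_def ptab_def wtab_def lact_Nil lact_Cons)

lemma Wfv_h0i: "permX (word_inv h0w) 0 = 0 \<and> aw (wordX (word_inv h0w) 0) [] = Wd (0, False)"
  by (simp add: h0w_def commw_def l12w_def l23w_def l13w_def Wd_def Pg_def Wg_def ptab_def wtab_def lact_Nil lact_Cons)

lemma Wfv_h1: "permX h1w 0 = 0 \<and> aw (wordX h1w 0) [] = Wd (1, True)"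
  by (simp add: h1w_def commw_def l12w_def l23w_def l13w_def d123w_def Wd_def Pg_def Wg_def ptab_def wtab_def lact_Nil lact_Cons)

lemma Wfv_h1i: "permX (word_inv h1w) 0 = 0 \<and> aw (wordX (word_inv h1w) 0) [] = Wd (1, False)"
  by (simp add: h1w_def commw_def l12w_def l23w_def l13w_def d123w_def Wd_def Pg_def Wg_def ptab_def wtab_def lact_Nil lact_Cons)

lemma Wfv_facts:
  assumes "fst x \<in> {0, 1}"
  shows "permX (Wfv x) 0 = 0 \<and> aw (wordX (Wfv x) 0) [] = Wd x"
  using letter_cases[OF assms] Wfv_h0 Wfv_h0i Wfv_h1 Wfv_h1i
  by (auto simp: Wfv_def)

lemma pf_facts:
  assumes "fst x \<in> {0, 1}"
  shows "pf x \<noteq> [] \<and> take (length (pf x)) (Wd x) = pf x"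
  using letter_cases[OF assms] by (auto simp: pf_def Wd_def)

lemma pong_facts:
  assumes "fst x \<in> {0, 1}" "fst y \<in> {0, 1}" "y \<noteq> (fst x, \<not> snd x)"
  shows "take (length (pf x)) (aw (Wd x @ pf y) []) = pf x \<and>
         last (aw (Wd x @ pf y) []) = last (pf y) \<and> aw (Wd x @ pf y) [] \<noteq> []"
  using letter_cases[OF assms(1)] letter_cases[OF assms(2)] assms(3)
  by (elim disjE) (simp_all add: pf_def Wd_def lact_Nil lact_Cons)

lemma sub_Cons: "sub (x # w) = Wfv x @ sub w"
  by (simp add: sub_def)

lemma pingpong:
  "reduced (l # rho) \<Longrightarrow> fst ` set (l # rho) \<subseteq> {0, 1} \<Longrightarrow>
   \<exists>rest. actX (sub (l # rho)) ([], 0) = (pf l @ rest, 0) \<and> reduced (pf l @ rest)"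
proof (induction rho arbitrary: l)
  case Nil
  then have l: "fst l \<in> {0, 1}" by auto
  have "actX (sub [l]) ([], 0) = (Wd l, 0)"
    using Wfv_facts[OF l] by (simp add: sub_def actX_def)
  moreover have "Wd l = pf l @ drop (length (pf l)) (Wd l)"
    using pf_facts[OF l] by (metis append_take_drop_id)
  moreover have "reduced (Wd l)" using Wfv_facts[OF l] reduced_aw[of "[]" "wordX (Wfv l) 0"] by simp
  ultimately show ?case by metis
next
  case (Cons l' rho)
  then have l: "fst l \<in> {0, 1}" and l': "fst l' \<in> {0, 1}" by auto
  have ne: "l' \<noteq> (fst l, \<not> snd l)" using Cons.prems(1) by simp
  obtain rest where rest: "actX (sub (l' # rho)) ([], 0) = (pf l' @ rest, 0)"
      "reduced (pf l' @ rest)"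
    using Cons.IH[of l'] Cons.prems reduced_tl by auto
  have "actX (sub (l # l' # rho)) ([], 0) = actX (Wfv l) (pf l' @ rest, 0)"
    using rest by (simp add: sub_Cons actX_append)
  also have "\<dots> = (aw (Wd l) (pf l' @ rest), 0)"
    using Wfv_facts[OF l] aw_red[OF rest(2), of "wordX (Wfv l) 0"] by (simp add: actX_def)
  finally have eq: "actX (sub (l # l' # rho)) ([], 0) = (aw (Wd l) (pf l' @ rest), 0)" .
  obtain rest' where "aw (Wd l) (pf l' @ rest) = pf l @ rest'"
    using pong[of "pf l'" rest "pf l" "Wd l"] pf_facts[OF l'] rest(2)
      pong_facts[OF l l' ne] by blast
  moreover have "reduced (aw (Wd l) (pf l' @ rest))" using reduced_aw[OF rest(2)] .
  ultimately show ?case using eq by metis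
qed


abbreviation clG :: "nat word \<Rightarrow> nat word set" where
  "clG w \<equiv> cls {0, 1} {} w"

lemma Wfv_words: "Wfv x \<in> words_over FVB3_gens"
  using h0w_words h1w_words by (simp add: Wfv_def Let_def)

lemma sub_Nil[simp]: "sub [] = []" by (simp add: sub_def)
lemma sub_append: "sub (u @ v) = sub u @ sub v" by (simp add: sub_def)

lemma sub_words: "sub w \<in> words_over FVB3_gens"
  by (induction w) (simp_all add: sub_Cons Wfv_words)

lemma Wfv_inv: "Wfv (fst x, \<not> snd x) = word_inv (Wfv x)"
  by (cases "snd x") (simp_all add: Wfv_def Let_def)

lemma sub_inv: "sub (word_inv w) = word_inv (sub w)"
  by (induction w) (simp_all add: sub_Cons sub_append Wfv_inv)

lemma Wfv_cancel: "(Wfv (a, b) @ Wfv (a, \<not> b), []) \<in> pres_rel FVB3_gens FVB3_rels"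
  using Wfv_inv[of "(a, b)"] pres_rel_cancel_inv[OF Wfv_words[of "(a, b)"]] by simp

lemma sub_rel:
  assumes "(w1, w2) \<in> pres_rel {0, 1} {}"
  shows "(sub w1, sub w2) \<in> pres_rel FVB3_gens FVB3_rels"
  using assms
proof induction
  case (refl w) show ?case by (rule pres_rel.refl[OF sub_words])
next
  case (sym u v) then show ?case by (blast intro: pres_rel.sym)
next
  case (trans u v w) then show ?case by (blast intro: pres_rel.trans)
next
  case (cancel u v a b)
  have "(sub u @ (Wfv (a, b) @ Wfv (a, \<not> b)) @ sub v, sub u @ [] @ sub v)
          \<in> pres_rel FVB3_gens FVB3_rels"
    by (rule pres_rel_ctxt[OF Wfv_cancel sub_words sub_words])
  then show ?case by (simp add: sub_append sub_Cons)
next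
  case (relator r u v) then show ?case by simp
qed

lemma lact_rel:
  assumes "fst x \<in> S" "q \<in> words_over S"
  shows "(x # q, lact x q) \<in> pres_rel S R"
proof (cases q)
  case Nil then show ?thesis using assms by (auto simp: lact_Nil intro: pres_rel.refl)
next
  case (Cons y q')
  show ?thesis
  proof (cases "y = (fst x, \<not> snd x)")
    case True
    have "([] @ [(fst x, snd x), (fst x, \<not> snd x)] @ q', [] @ q') \<in> pres_rel S R"
      using assms Cons by (intro pres_rel.cancel) auto
    then show ?thesis using Cons True by (simp add: lact_Cons)
  next
    case False
    then show ?thesis using Cons assms by (auto simp: lact_Cons intro: pres_rel.refl)
  qed
qed

lemma red_rel: "w \<in> words_over S \<Longrightarrow> (w, aw w []) \<in> pres_rel S R"
proof (induction w)
  case Nil then show ?case by (auto intro: pres_rel.refl)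
next
  case (Cons x w)
  have aw_w: "aw w [] \<in> words_over S"
    using set_aw[of w "[]"] Cons.prems by (auto simp: words_over_def)
  have "([x] @ w @ [], [x] @ aw w [] @ []) \<in> pres_rel S R"
    using Cons by (intro pres_rel_ctxt) auto
  moreover have "(x # aw w [], lact x (aw w [])) \<in> pres_rel S R"
    using Cons.prems aw_w by (intro lact_rel) auto
  ultimately show ?case by (auto intro: pres_rel.trans)
qed

definition gmap :: "nat word set \<Rightarrow> nat word set" where
  "gmap A = clF (sub (SOME w. w \<in> words_over {0, 1} \<and> A = clG w))"

lemma gmap_cls:
  assumes "w \<in> words_over {0, 1}"
  shows "gmap (clG w) = clF (sub w)"
proof -
  define w' where "w' = (SOME w'. w' \<in> words_over {0, 1} \<and> clG w = clG w')"
  have "w' \<in> words_over {0, 1} \<and> clG w = clG w'"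
    unfolding w'_def by (rule someI[of _ w]) (use assms in auto)
  then have "(w, w') \<in> pres_rel {0, 1} {}" using cls_eq_iff[OF assms] by blast
  then have "(sub w, sub w') \<in> pres_rel FVB3_gens FVB3_rels" by (rule sub_rel)
  then have "clF (sub w) = clF (sub w')" using cls_eq_iff[OF sub_words] by blast
  then show ?thesis by (simp add: gmap_def w'_def)
qed

lemma F2_carrier: "carrier free_group2 = clG ` words_over {0, 1}"
  by (simp add: free_group2_def presented_group_carrier)

lemma F2_mult: "u \<in> words_over {0, 1} \<Longrightarrow> v \<in> words_over {0, 1} \<Longrightarrow>
   clG u \<otimes>\<^bsub>free_group2\<^esub> clG v = clG (u @ v)"
  by (simp add: free_group2_def presented_group_mult)

lemma FVB3_one: "\<one>\<^bsub>FVB3\<^esub> = clF []"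
  by (simp add: FVB3_def presented_group_one)

lemma Wfv_gen:
  assumes "fst x \<in> {0, 1}"
  shows "clF (Wfv x) \<in> generate FVB3 {h0, h1}"
proof -
  have "x = (0, True) \<or> x = (0, False) \<or> x = (1, True) \<or> x = (1, False)"
    using letter_cases[OF assms] .
  moreover have "clF h0w \<in> generate FVB3 {h0, h1}" "clF h1w \<in> generate FVB3 {h0, h1}"
    using h0_eq h1_eq by (auto intro: generate.incl)
  moreover have "clF (word_inv h0w) \<in> generate FVB3 {h0, h1}"
    using generate.inv[of h0 "{h0, h1}" FVB3] h0_eq FVB3_inv[OF h0w_words] by simp
  moreover have "clF (word_inv h1w) \<in> generate FVB3 {h0, h1}"
    using generate.inv[of h1 "{h0, h1}" FVB3] h1_eq FVB3_inv[OF h1w_words] by simp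
  ultimately show ?thesis by (auto simp: Wfv_def)
qed

lemma sub_gen: "w \<in> words_over {0, 1} \<Longrightarrow> clF (sub w) \<in> generate FVB3 {h0, h1}"
proof (induction w)
  case Nil
  then show ?case using FVB3_one generate.one[of FVB3 "{h0, h1}"] by simp
next
  case (Cons x w)
  have "clF (sub (x # w)) = clF (Wfv x) \<otimes>\<^bsub>FVB3\<^esub> clF (sub w)"
    by (simp add: sub_Cons FVB3_mult Wfv_words sub_words)
  then show ?case using Cons Wfv_gen[of x] by (auto intro: generate.eng)
qed

lemma gen_sub: "h \<in> generate FVB3 {h0, h1} \<Longrightarrow> \<exists>w \<in> words_over {0, 1}. h = clF (sub w)"
proof (induction rule: generate.induct)
  case one
  then show ?case using FVB3_one by (intro bexI[of _ "[]"]) auto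
next
  case (incl h)
  then show ?case
  proof
    assume "h = h0"
    then show ?thesis using h0_eq
      by (intro bexI[of _ "[(0, True)]"]) (auto simp: sub_Cons Wfv_def)
  next
    assume "h \<in> {h1}"
    then show ?thesis using h1_eq
      by (intro bexI[of _ "[(1, True)]"]) (auto simp: sub_Cons Wfv_def)
  qed
next
  case (inv h)
  then show ?case
  proof
    assume "h = h0"
    then show ?thesis using h0_eq FVB3_inv[OF h0w_words]
      by (intro bexI[of _ "[(0, False)]"]) (auto simp: sub_Cons Wfv_def)
  next
    assume "h \<in> {h1}"
    then show ?thesis using h1_eq FVB3_inv[OF h1w_words]
      by (intro bexI[of _ "[(1, False)]"]) (auto simp: sub_Cons Wfv_def)
  qed
next
  case (eng h1 h2)
  then obtain w1 w2 where w: "w1 \<in> words_over {0, 1}" "h1 = clF (sub w1)"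
    "w2 \<in> words_over {0, 1}" "h2 = clF (sub w2)" by blast
  then have "h1 \<otimes>\<^bsub>FVB3\<^esub> h2 = clF (sub (w1 @ w2))"
    by (simp add: FVB3_mult sub_words sub_append)
  then show ?case using w by (intro bexI[of _ "w1 @ w2"]) auto
qed

lemma kernel_triv:
  assumes w: "w \<in> words_over {0, 1}"
    and "(sub w, []) \<in> pres_rel FVB3_gens FVB3_rels"
  shows "(w, []) \<in> pres_rel {0, 1} {}"
proof -
  define rho where "rho = aw w []"
  have wr: "(w, rho) \<in> pres_rel {0, 1} {}" unfolding rho_def by (rule red_rel[OF w])
  have "(sub rho, []) \<in> pres_rel FVB3_gens FVB3_rels"
    using sub_rel[OF wr] assms(2) by (blast intro: pres_rel.sym pres_rel.trans)
  then have act: "actX (sub rho) ([], 0) = ([], 0)"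
    using actX_inv[of "sub rho" "[]" "[]" 0] by (simp add: actX_def)
  have "rho = []"
  proof (rule ccontr)
    assume "rho \<noteq> []"
    then obtain l rho' where lr: "rho = l # rho'" by (cases rho) auto
    have "reduced rho" unfolding rho_def by (rule reduced_aw) simp
    moreover have "fst ` set rho \<subseteq> {0, 1}"
    proof -
      have "fst ` set rho \<subseteq> fst ` set w" using set_aw[of w "[]"] unfolding rho_def by auto
      moreover have "fst ` set w \<subseteq> {0, 1}" using w unfolding words_over_def by simp
      ultimately show ?thesis by (rule order_trans)
    qed
    ultimately obtain rest where "actX (sub rho) ([], 0) = (pf l @ rest, 0)"
      using pingpong[of l rho'] lr by auto
    moreover have "fst l \<in> {0, 1}" using \<open>fst ` set rho \<subseteq> {0, 1}\<close> lr by auto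
    ultimately show False using act pf_facts by fastforce
  qed
  then show ?thesis using wr by simp
qed

lemmas gmap_cls' = gmap_cls[simplified]
lemmas sub_gen' = sub_gen[simplified]
lemmas F2_mult' = F2_mult[simplified]

lemma gmap_inj: "inj_on gmap (carrier free_group2)"
proof (rule inj_onI)
  fix x y assume "x \<in> carrier free_group2" "y \<in> carrier free_group2" "gmap x = gmap y"
  then obtain w1 w2 where w: "w1 \<in> words_over {0, 1}" "x = clG w1"
      "w2 \<in> words_over {0, 1}" "y = clG w2" "clF (sub w1) = clF (sub w2)"
    by (auto simp: F2_carrier gmap_cls gmap_cls')
  then have r12: "(sub w1, sub w2) \<in> pres_rel FVB3_gens FVB3_rels"
    using cls_eq_iff[OF sub_words] by blast
  define w where "w = w1 @ word_inv w2"
  have ww: "w \<in> words_over {0, 1}" using w by (simp add: w_def)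
  have "(sub w1 @ word_inv (sub w2), sub w2 @ word_inv (sub w2)) \<in> pres_rel FVB3_gens FVB3_rels"
    using r12 by (intro pres_rel_app pres_rel.refl) (simp_all add: sub_words)
  then have "(sub w, []) \<in> pres_rel FVB3_gens FVB3_rels"
    using pres_rel_cancel_inv[OF sub_words[of w2]]
    by (auto simp: w_def sub_append sub_inv intro: pres_rel.trans)
  then have k: "(w, []) \<in> pres_rel {0, 1} {}" by (rule kernel_triv[OF ww])
  have "(w @ w2, [] @ w2) \<in> pres_rel {0, 1} {}"
    using k w by (intro pres_rel_app pres_rel.refl) auto
  moreover have "(w1 @ (word_inv w2 @ w2) @ [], w1 @ [] @ []) \<in> pres_rel {0, 1} {}"
    using w by (intro pres_rel_ctxt pres_rel_inv_cancel) auto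
  ultimately have "(w1, w2) \<in> pres_rel {0, 1} {}"
    by (auto simp: w_def intro: pres_rel.trans pres_rel.sym)
  then show "x = y" using w cls_eq_iff by metis
qed

theorem mainTheorem8:
  shows "FVB3\<lparr>carrier := generate FVB3 {h0, h1}\<rparr> \<cong> free_group2"
proof -
  let ?H = "FVB3\<lparr>carrier := generate FVB3 {h0, h1}\<rparr>"
  have car: "gmap x \<in> carrier ?H" if "x \<in> carrier free_group2" for x
    using that by (auto simp: F2_carrier gmap_cls gmap_cls' sub_gen sub_gen')
  have mul: "gmap (x \<otimes>\<^bsub>free_group2\<^esub> y) = gmap x \<otimes>\<^bsub>FVB3\<^esub> gmap y"
    if xy: "x \<in> carrier free_group2" "y \<in> carrier free_group2" for x y
  proof -
    obtain u v where uv: "u \<in> words_over {0, 1}" "x = clG u"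
        "v \<in> words_over {0, 1}" "y = clG v"
      using xy unfolding F2_carrier by blast
    then show ?thesis
      by (simp add: F2_mult F2_mult' gmap_cls gmap_cls' FVB3_mult sub_words sub_append)
  qed
  have hom: "gmap \<in> hom free_group2 ?H"
    using car mul by (auto simp: hom_def)
  have img: "gmap ` carrier free_group2 = carrier ?H"
  proof
    show "gmap ` carrier free_group2 \<subseteq> carrier ?H"
      by (auto simp: F2_carrier gmap_cls gmap_cls' sub_gen sub_gen')
  next
    show "carrier ?H \<subseteq> gmap ` carrier free_group2"
    proof
      fix h assume "h \<in> carrier ?H"
      then obtain w where w: "w \<in> words_over {0, 1}" "h = clF (sub w)"
        using gen_sub by auto
      then have "h = gmap (clG w)" using gmap_cls by simp
      moreover have "clG w \<in> carrier free_group2" using w unfolding F2_carrier by blast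
      ultimately show "h \<in> gmap ` carrier free_group2" by blast
    qed
  qed
  have "gmap \<in> iso free_group2 ?H"
    using hom img gmap_inj by (simp add: iso_iff)
  then have "free_group2 \<cong> ?H" by (rule is_isoI)
  then show ?thesis
    using group.iso_sym[OF presented_group_is_group[of "{0, 1::nat}" "{}"]]
    by (simp add: free_group2_def)
qed

end
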